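(* Let $|\psi\rangle,|\phi\rangle,|e\rangle,|f\rangle$ be unit vectors in $\mathbb{C}^2$ and let $\mathcal{R}$ be the set of random unitary channels on $\mathcal{L}(\mathbb{C}^2)$. Then $$\max_{\Psi\in\mathcal{R}}\left\{\frac12\langle e|\Psi(|\psi\rangle\langle\psi|)|e\rangle+\frac12\langle f|\Psi(|\phi\rangle\langle\phi|)|f\rangle\right\}=\frac12\left(1+|\langle\psi|\phi\rangle||\langle e|f\rangle|+\sqrt{(1-|\langle\psi|\phi\rangle|^2)(1-|\langle e|f\rangle|^2)}\right).$$ The right-hand side equals $1$ if and only if $|\langle\psi|\phi\rangle|=|\langle e|f\rangle|$; consequently, $(|\psi\rangle,|\phi\rangle)$ is jointly convertible into $(|e\rangle,|f\rangle)$ within $\mathcal{R}$ if and only if $|\langle\psi|\phi\rangle|=|\langle e|f\rangle|$.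
   Context: $\mathcal{R}$ consists of the maps $A\mapsto\sum_xp_xU_xAU_x^\dagger$ with $\{p_x\}$ a finite probability distribution and $U_x$ unitary operators on $\mathbb{C}^2$. For a set $\mathcal{X}$ of quantum channels, $(|\psi\rangle,|\phi\rangle)$ is jointly convertible into $(|e\rangle,|f\rangle)$ within $\mathcal{X}$ if there exists $\Psi\in\mathcal{X}$ with $\Psi(|\psi\rangle\langle\psi|)=|e\rangle\langle e|$ and $\Psi(|\phi\rangle\langle\phi|)=|f\rangle\langle f|$. *)

theory Defs
  imports "HOL-Analysis.Analysis"
begin

type_synonym qvec = "complex ^ 2"
type_synonym qop = "complex ^ 2 ^ 2"

definition braket :: "qvec \<Rightarrow> qvec \<Rightarrow> complex" where
  "braket x y = (\<Sum>i\<in>UNIV. cnj (x $ i) * y $ i)"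

definition ketbra :: "qvec \<Rightarrow> qop" where
  "ketbra x = (\<chi> i j. x $ i * cnj (x $ j))"

definition adjm :: "qop \<Rightarrow> qop" where
  "adjm A = (\<chi> i j. cnj (A $ j $ i))"

definition unitary_op :: "qop \<Rightarrow> bool" where
  "unitary_op U \<longleftrightarrow> U ** adjm U = mat 1 \<and> adjm U ** U = mat 1"

definition random_unitary_channels :: "(qop \<Rightarrow> qop) set" where
  "random_unitary_channels =
     {\<Psi>. \<exists>(n::nat) (p::nat \<Rightarrow> real) (U::nat \<Rightarrow> qop).
           (\<forall>x<n. 0 \<le> p x) \<and> (\<Sum>x<n. p x) = 1 \<and> (\<forall>x<n. unitary_op (U x)) \<and>
           \<Psi> = (\<lambda>A. \<Sum>x<n. p x *\<^sub>R (U x ** A ** adjm (U x)))}"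

definition jointly_convertible ::
  "(qop \<Rightarrow> qop) set \<Rightarrow> qvec \<Rightarrow> qvec \<Rightarrow> qvec \<Rightarrow> qvec \<Rightarrow> bool" where
  "jointly_convertible X \<psi> \<phi> e f \<longleftrightarrow>
     (\<exists>\<Psi>\<in>X. \<Psi> (ketbra \<psi>) = ketbra e \<and> \<Psi> (ketbra \<phi>) = ketbra f)"

definition success :: "(qop \<Rightarrow> qop) \<Rightarrow> qvec \<Rightarrow> qvec \<Rightarrow> qvec \<Rightarrow> qvec \<Rightarrow> real" where
  "success \<Psi> \<psi> \<phi> e f =
     Re (braket e (\<Psi> (ketbra \<psi>) *v e)) / 2 + Re (braket f (\<Psi> (ketbra \<phi>) *v f)) / 2"

end

theory Submission
  imports Defs
begin

lemma norm2_unit: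
  fixes u :: "complex^2"
  shows "(norm u)\<^sup>2 = (cmod (u$1))\<^sup>2 + (cmod (u$2))\<^sup>2"
  by (simp add: norm_vec_def L2_set_def sum_2)

lemma unit_c: fixes u :: "complex^2" assumes "norm u = 1"
  shows "u$1 * cnj (u$1) + u$2 * cnj (u$2) = 1"
proof -
  have "(cmod (u$1))\<^sup>2 + (cmod (u$2))\<^sup>2 = 1" using norm2_unit[of u] assms by simp
  then have "complex_of_real ((cmod (u$1))\<^sup>2 + (cmod (u$2))\<^sup>2) = 1" by simp
  then show ?thesis by (simp only: of_real_add complex_norm_square)
qed

lemma unit_r: fixes u :: "complex^2" assumes "norm u = 1"
  shows "(Re (u$1))\<^sup>2 + (Im (u$1))\<^sup>2 + (Re (u$2))\<^sup>2 + (Im (u$2))\<^sup>2 = 1"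
  using norm2_unit[of u] assms by (simp add: cmod_power2)

lemma braket_exp: "braket x y = cnj (x$1) * y$1 + cnj (x$2) * y$2"
  by (simp add: braket_def sum_2)

lemma ketbra_conj: "U ** ketbra w ** adjm U = ketbra (U *v w)"
  by (simp add: vec_eq_iff forall_2 matrix_matrix_mult_def matrix_vector_mult_def ketbra_def adjm_def sum_2 algebra_simps)

lemma braket_ketbra: "braket e (ketbra w *v e) = of_real ((cmod (braket e w))\<^sup>2)"
  unfolding complex_norm_square
  by (simp add: braket_exp matrix_vector_mult_def ketbra_def sum_2 algebra_simps)

lemma unitary_braket: assumes "unitary_op U"
  shows "braket (U *v x) (U *v y) = braket x y"
proof -
  have "adjm U ** U = mat 1" using assms unfolding unitary_op_def by simp
  then have h: "cnj (U$1$1) * U$1$1 + cnj (U$2$1) * U$2$1 = 1"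
     "cnj (U$1$1) * U$1$2 + cnj (U$2$1) * U$2$2 = 0"
     "cnj (U$1$2) * U$1$1 + cnj (U$2$2) * U$2$1 = 0"
     "cnj (U$1$2) * U$1$2 + cnj (U$2$2) * U$2$2 = 1"
    by (simp_all add: vec_eq_iff forall_2 matrix_matrix_mult_def adjm_def sum_2 mat_def)
  show ?thesis
    apply (simp add: braket_exp matrix_vector_mult_def sum_2)
    using h by algebra
qed

lemma braket_lin:
  assumes "finite S"
  shows "braket e ((\<Sum>x\<in>S. c x *\<^sub>R M x) *v e) = (\<Sum>x\<in>S. of_real (c x) * braket e (M x *v e))"
  using assms
proof (induction S rule: finite_induct)
  case empty
  then show ?case by (simp add: braket_def)
next
  case (insert x F)
  have "braket e ((c x *\<^sub>R M x + (\<Sum>x\<in>F. c x *\<^sub>R M x)) *v e)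
      = of_real (c x) * braket e (M x *v e) + braket e ((\<Sum>x\<in>F. c x *\<^sub>R M x) *v e)"
    apply (simp add: braket_exp matrix_vector_mult_def sum_2 algebra_simps)
    apply (simp add: scaleR_conv_of_real algebra_simps)
    done
  then show ?case using insert by simp
qed

lemma success_formula:
  fixes n :: nat and U :: "nat \<Rightarrow> qop"
  assumes "\<Psi> = (\<lambda>A. \<Sum>x<n. p x *\<^sub>R (U x ** A ** adjm (U x)))"
  shows "success \<Psi> \<psi> \<phi> e f = (\<Sum>x<n. p x * (((cmod (braket e (U x *v \<psi>)))\<^sup>2 + (cmod (braket f (U x *v \<phi>)))\<^sup>2) / 2))"
proof -
  have 1: "Re (braket e (\<Psi> (ketbra w) *v e)) = (\<Sum>x<n. p x * (cmod (braket e (U x *v w)))\<^sup>2)" for e w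
    unfolding assms ketbra_conj
    by (subst braket_lin[OF finite_lessThan]) (simp add: braket_ketbra)
  show ?thesis unfolding success_def 1
    by (simp add: sum_divide_distrib sum.distrib algebra_simps add_divide_distrib)
qed

definition bloch :: "qvec \<Rightarrow> real^3" where
  "bloch u = vector [2 * Re (cnj (u$1) * u$2), 2 * Im (cnj (u$1) * u$2), (cmod (u$1))\<^sup>2 - (cmod (u$2))\<^sup>2]"

lemma bloch_ip:
  assumes "norm u = 1" "norm w = 1"
  shows "(cmod (braket u w))\<^sup>2 = (1 + bloch u \<bullet> bloch w) / 2"
proof -
  note h = unit_r[OF assms(1)] unit_r[OF assms(2)]
  show ?thesis
    apply (simp add: bloch_def inner_vec_def sum_3 braket_exp cmod_power2)
    using h unfolding power2_eq_square by algebra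
qed

lemma braket_self: fixes u :: qvec assumes "norm u = 1" shows "braket u u = 1"
  using unit_c[OF assms] by (simp add: braket_exp algebra_simps)

lemma bloch_norm: assumes "norm u = 1" shows "bloch u \<bullet> bloch u = 1"
  using bloch_ip[OF assms assms] braket_self[OF assms] by simp

lemma norm_from_sq: fixes z :: "real^3" assumes "z \<bullet> z = c\<^sup>2" "c \<ge> 0" shows "norm z = c"
  using assms by (metis norm_ge_zero power2_eq_iff_nonneg power2_norm_eq_inner)

lemma lin_aux: "(u::real) \<le> 4*w \<Longrightarrow> v \<le> 4*z \<Longrightarrow> (u+v)/2 \<le> 2*w+2*z" by (simp add: field_simps)

lemma core:
  assumes "norm x = 1" "norm y = 1" "norm e = 1" "norm f = 1"
  defines "a \<equiv> cmod (braket x y)" and "b \<equiv> cmod (braket e f)"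
  shows "(cmod (braket e x))\<^sup>2 + (cmod (braket f y))\<^sup>2 \<le> 1 + a * b + sqrt ((1 - a\<^sup>2) * (1 - b\<^sup>2))"
proof -
  define P where "P = bloch x"
  define Q where "Q = bloch y"
  define S where "S = bloch e"
  define T where "T = bloch f"
  have PP: "P \<bullet> P = 1" "Q \<bullet> Q = 1" "S \<bullet> S = 1" "T \<bullet> T = 1"
    using bloch_norm assms unfolding P_def Q_def S_def T_def by auto
  have a2: "a\<^sup>2 = (1 + P \<bullet> Q) / 2" unfolding a_def P_def Q_def using bloch_ip assms by auto
  have b2: "b\<^sup>2 = (1 + S \<bullet> T) / 2" unfolding b_def S_def T_def using bloch_ip assms by auto
  have l: "(cmod (braket e x))\<^sup>2 + (cmod (braket f y))\<^sup>2 = (1 + S \<bullet> P)/2 + (1 + T \<bullet> Q)/2"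
    unfolding P_def Q_def S_def T_def using bloch_ip[of e x] bloch_ip[of f y] assms(1-4) by linarith
  have a0: "a \<ge> 0" "b \<ge> 0" unfolding a_def b_def by auto
  have pq1: "(P + Q) \<bullet> (P + Q) = (2*a)\<^sup>2" using PP a2
    by (simp add: inner_add_left inner_add_right inner_commute power_mult_distrib)
  have st1: "(S + T) \<bullet> (S + T) = (2*b)\<^sup>2" using PP b2
    by (simp add: inner_add_left inner_add_right inner_commute power_mult_distrib)
  have pq2': "(P - Q) \<bullet> (P - Q) = 4 * (1 - a\<^sup>2)" using PP a2
    by (simp add: inner_diff_left inner_diff_right inner_commute)
  have st2': "(S - T) \<bullet> (S - T) = 4 * (1 - b\<^sup>2)" using PP b2
    by (simp add: inner_diff_left inner_diff_right inner_commute)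
  have ha: "1 - a\<^sup>2 \<ge> 0" using pq2' inner_ge_zero[of "P - Q"] by simp
  have hb: "1 - b\<^sup>2 \<ge> 0" using st2' inner_ge_zero[of "S - T"] by simp
  have pq2: "(P - Q) \<bullet> (P - Q) = (2 * sqrt (1 - a\<^sup>2))\<^sup>2" using pq2' ha
    by (simp add: power_mult_distrib)
  have st2: "(S - T) \<bullet> (S - T) = (2 * sqrt (1 - b\<^sup>2))\<^sup>2" using st2' hb
    by (simp add: power_mult_distrib)
  have n1: "norm (P + Q) = 2*a" by (rule norm_from_sq[OF pq1]) (use a0 in auto)
  have n2: "norm (S + T) = 2*b" by (rule norm_from_sq[OF st1]) (use a0 in auto)
  have n3: "norm (P - Q) = 2 * sqrt (1 - a\<^sup>2)" by (rule norm_from_sq[OF pq2]) (use ha in auto)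
  have n4: "norm (S - T) = 2 * sqrt (1 - b\<^sup>2)" by (rule norm_from_sq[OF st2]) (use hb in auto)
  have c1: "(S + T) \<bullet> (P + Q) \<le> 4 * (a * b)"
    using norm_cauchy_schwarz[of "S + T" "P + Q"] n1 n2 by (simp add: mult_ac)
  have c2: "(S - T) \<bullet> (P - Q) \<le> 4 * sqrt ((1 - a\<^sup>2) * (1 - b\<^sup>2))"
    using norm_cauchy_schwarz[of "S - T" "P - Q"] n3 n4 by (simp add: real_sqrt_mult mult_ac)
  have sp: "S \<bullet> P + T \<bullet> Q = ((S + T) \<bullet> (P + Q) + (S - T) \<bullet> (P - Q)) / 2"
    by (simp add: inner_add_left inner_add_right inner_diff_left inner_diff_right)
  have "S \<bullet> P + T \<bullet> Q \<le> 2 * (a * b) + 2 * sqrt ((1 - a\<^sup>2) * (1 - b\<^sup>2))"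
    unfolding sp using lin_aux[OF c1 c2] .
  then show ?thesis unfolding l by (simp add: field_simps)
qed

definition perp :: "qvec \<Rightarrow> qvec" where
  "perp u = vector [- cnj (u$2), cnj (u$1)]"

lemma perp_c [simp]: "perp u $ 1 = - cnj (u$2)" "perp u $ 2 = cnj (u$1)"
  by (simp_all add: perp_def)

lemma braket_perp1: "braket (perp u) u = 0" by (simp add: braket_exp algebra_simps)
lemma braket_perp2: "braket u (perp u) = 0" by (simp add: braket_exp algebra_simps)
lemma braket_perp3: assumes "norm u = 1" shows "braket (perp u) (perp u) = 1"
  using unit_c[OF assms] by (simp add: braket_exp algebra_simps)

lemma expansion: assumes "norm x = 1"
  shows "y = braket x y *s x + braket (perp x) y *s perp x"
proof -
  have h: "x$1 * cnj (x$1) + x$2 * cnj (x$2) = 1" using unit_c[OF assms] .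
  show ?thesis
    apply (simp add: vec_eq_iff forall_2 braket_exp)
    using h by algebra
qed

lemma parseval: assumes "norm x = 1" "norm y = 1"
  shows "(cmod (braket x y))\<^sup>2 + (cmod (braket (perp x) y))\<^sup>2 = 1"
proof -
  note h = unit_r[OF assms(1)] unit_r[OF assms(2)]
  show ?thesis
    apply (simp add: braket_exp cmod_power2)
    using h unfolding power2_eq_square by algebra
qed

lemma unitary_exists:
  assumes "norm \<psi> = 1" "norm \<phi> = 1" "norm x = 1" "norm y = 1"
    and "braket x y = braket \<psi> \<phi>"
  shows "\<exists>U. unitary_op U \<and> U *v \<psi> = x \<and> U *v \<phi> = y"
proof -
  define k where "k = braket (perp \<psi>) \<phi>"
  define k' where "k' = braket (perp x) y"
  define l where "l = (if k = 0 then 1 else k' / k)"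
  have "cmod k = cmod k'"
    using parseval[OF assms(1,2)] parseval[OF assms(3,4)] assms(5) unfolding k_def k'_def
    by (metis add_left_cancel norm_ge_zero power2_eq_iff_nonneg)
  then have l1: "cmod l = 1" and lk: "l * k = k'"
    unfolding l_def by (auto simp: norm_divide)
  have lc: "l * cnj l = 1" using l1 complex_norm_square[of l] by simp
  define U :: qop where "U = (\<chi> i j. x$i * cnj (\<psi>$j) + l * perp x $ i * cnj (perp \<psi> $ j))"
  have Uv: "U *v w = braket \<psi> w *s x + (l * braket (perp \<psi>) w) *s perp x" for w
    by (simp add: U_def vec_eq_iff forall_2 matrix_vector_mult_def sum_2 braket_exp algebra_simps)
  have "U *v \<psi> = x" unfolding Uv using braket_self[OF assms(1)] braket_perp1[of \<psi>]
    by simp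
  moreover have "U *v \<phi> = y" unfolding Uv
    using expansion[OF assms(3), of y] assms(5) lk unfolding k_def k'_def by simp
  moreover have "unitary_op U"
  proof -
    note hx = unit_c[OF assms(3)] and hp = unit_c[OF assms(1)]
    have "U ** adjm U = mat 1"
      apply (simp add: U_def vec_eq_iff forall_2 matrix_matrix_mult_def sum_2 adjm_def mat_def)
      using hx hp lc by algebra
    moreover have "adjm U ** U = mat 1"
      apply (simp add: U_def vec_eq_iff forall_2 matrix_matrix_mult_def sum_2 adjm_def mat_def)
      using hx hp lc by algebra
    ultimately show ?thesis unfolding unitary_op_def by simp
  qed
  ultimately show ?thesis by blast
qed

lemma braket_lin_r: "braket z (\<alpha> *s u + \<beta> *s w) = \<alpha> * braket z u + \<beta> * braket z w"
  by (simp add: braket_exp algebra_simps)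
lemma braket_lin_l: "braket (\<alpha> *s u + \<beta> *s w) z = cnj \<alpha> * braket u z + cnj \<beta> * braket w z"
  by (simp add: braket_exp algebra_simps)
lemma braket_scale_r: "braket z (\<alpha> *s u) = \<alpha> * braket z u"
  by (simp add: braket_exp algebra_simps)
lemma braket_scale_l: "braket (\<alpha> *s u) z = cnj \<alpha> * braket u z"
  by (simp add: braket_exp algebra_simps)

lemma braket_self_norm: "braket v v = of_real ((norm v)\<^sup>2)"
  unfolding norm2_unit of_real_add complex_norm_square by (simp add: braket_exp algebra_simps)

lemma norm_iff: "norm v = 1 \<longleftrightarrow> braket v v = 1"
proof -
  have "norm v = 1 \<longleftrightarrow> (norm v)\<^sup>2 = 1" by (simp add: power2_eq_1_iff) (use norm_ge_zero[of v] in linarith)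
  also have "\<dots> \<longleftrightarrow> braket v v = 1" unfolding braket_self_norm
    by (metis of_real_1 of_real_eq_iff)
  finally show ?thesis .
qed

definition phase :: "complex \<Rightarrow> complex" where
  "phase z = (if z = 0 then 1 else z / of_real (cmod z))"

lemma phase_eq: "z = of_real (cmod z) * phase z"
  by (simp add: phase_def)
lemma phase_norm: "cmod (phase z) = 1"
  by (simp add: phase_def norm_divide)
lemma phase_cnj: "cnj (phase z) * phase z = 1"
  using complex_norm_square[of "phase z"] phase_norm[of z] by (simp add: mult.commute)

lemma braket_le1: assumes "norm x = 1" "norm y = 1" shows "cmod (braket x y) \<le> 1"
proof -
  have "(cmod (braket x y))\<^sup>2 \<le> 1" using parseval[OF assms] by (smt (verit) zero_le_power2)
  then show ?thesis by (simp add: power_le_one_iff abs_le_square_iff)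
qed

lemma attain:
  assumes "norm \<psi> = 1" "norm \<phi> = 1" "norm e = 1" "norm f = 1"
  defines "a \<equiv> cmod (braket \<psi> \<phi>)" and "b \<equiv> cmod (braket e f)"
  shows "\<exists>x y. norm x = 1 \<and> norm y = 1 \<and> braket x y = braket \<psi> \<phi> \<and>
     (cmod (braket e x))\<^sup>2 + (cmod (braket f y))\<^sup>2 = 1 + a * b + sqrt ((1 - a\<^sup>2) * (1 - b\<^sup>2))"
proof -
  define h where "h = braket \<psi> \<phi>"
  define g where "g = braket e f"
  define c where "c = braket (perp e) f"
  define \<nu> where "\<nu> = phase c * cnj (phase g)"
  have a01: "0 \<le> a" "a \<le> 1" unfolding a_def using braket_le1 assms by auto
  have b01: "0 \<le> b" "b \<le> 1" unfolding b_def using braket_le1 assms by auto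
  define A where "A = arccos a"
  define B where "B = arccos b"
  define t1 where "t1 = (B - A) / 2"
  define t2 where "t2 = (B + A) / 2"
  have cA: "cos A = a" "sin A = sqrt (1 - a\<^sup>2)" unfolding A_def using a01 by (auto simp: sin_arccos)
  have cB: "cos B = b" "sin B = sqrt (1 - b\<^sup>2)" unfolding B_def using b01 by (auto simp: sin_arccos)
  have s_c: "cmod c = sqrt (1 - b\<^sup>2)"
    using parseval[OF assms(3,4)] unfolding b_def c_def
    by (metis add_diff_cancel_left' norm_ge_zero real_sqrt_abs abs_of_nonneg)
  have \<nu>1: "cnj \<nu> * \<nu> = 1"
  proof -
    have "cnj \<nu> * \<nu> = (cnj (phase c) * phase c) * (cnj (phase g) * phase g)"
      unfolding \<nu>_def by (simp add: algebra_simps)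
    then show ?thesis using phase_cnj by simp
  qed
  define x where "x = of_real (cos t1) *s e + (of_real (sin t1) * \<nu>) *s perp e"
  define y' where "y' = of_real (cos t2) *s e + (of_real (sin t2) * \<nu>) *s perp e"
  define y where "y = phase h *s y'"
  note ee = braket_self[OF assms(3)] braket_perp1[of e] braket_perp2[of e] braket_perp3[OF assms(3)]
  have gen: "braket (of_real (cos t) *s e + (of_real (sin t) * \<nu>) *s perp e)
                    (of_real (cos s) *s e + (of_real (sin s) * \<nu>) *s perp e) = of_real (cos (t - s))" for t s
  proof -
    have "braket (of_real (cos t) *s e + (of_real (sin t) * \<nu>) *s perp e)
                    (of_real (cos s) *s e + (of_real (sin s) * \<nu>) *s perp e)
        = of_real (cos t * cos s) + of_real (sin t * sin s) * (cnj \<nu> * \<nu>)"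
      by (simp add: braket_lin_l braket_lin_r ee algebra_simps)
    then show ?thesis using \<nu>1 by (simp add: cos_diff)
  qed
  have nx: "norm x = 1" unfolding norm_iff x_def gen by simp
  have ny': "norm y' = 1" unfolding norm_iff y'_def gen by simp
  have xy': "braket x y' = of_real a" unfolding x_def y'_def gen t1_def t2_def using cA
    by (simp add: diff_divide_distrib add_divide_distrib)
  have ny: "norm y = 1" unfolding norm_iff y_def braket_scale_l braket_scale_r
    using phase_cnj[of h] ny'[unfolded norm_iff] by (simp add: mult.commute)
  have xy: "braket x y = h" unfolding y_def braket_scale_r xy' a_def h_def
    by (subst (3) phase_eq) (simp add: mult.commute)
  have ex: "braket e x = of_real (cos t1)" unfolding x_def braket_lin_r using ee by simp
  have fexp: "f = g *s e + c *s perp e" unfolding g_def c_def by (rule expansion[OF assms(3)])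
  have "braket f y' = cnj g * of_real (cos t2) + cnj c * (of_real (sin t2) * \<nu>)"
    by (subst fexp) (simp add: y'_def braket_lin_l braket_lin_r ee)
  also have "\<dots> = cnj (phase g) * of_real (b * cos t2) + of_real (sqrt (1 - b\<^sup>2) * sin t2) * ((cnj (phase c) * phase c) * cnj (phase g))"
    apply (subst (1) phase_eq[of g])
    apply (subst (1) phase_eq[of c])
    by (simp add: s_c b_def g_def \<nu>_def algebra_simps)
  also have "\<dots> = cnj (phase g) * of_real (cos B * cos t2 + sin B * sin t2)"
    using phase_cnj[of c] cB by (simp add: algebra_simps)
  also have "\<dots> = cnj (phase g) * of_real (cos t1)"
    by (simp add: cos_diff[symmetric] t1_def t2_def diff_divide_distrib add_divide_distrib)
  finally have fy': "braket f y' = cnj (phase g) * of_real (cos t1)" .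
  have fy: "cmod (braket f y) = \<bar>cos t1\<bar>"
    unfolding y_def braket_scale_r fy' by (simp add: norm_mult phase_norm)
  have "(cmod (braket e x))\<^sup>2 + (cmod (braket f y))\<^sup>2 = 2 * (cos t1)\<^sup>2"
    unfolding fy ex by simp
  also have "\<dots> = 1 + cos (2 * t1)" by (simp add: cos_double_cos)
  also have "\<dots> = 1 + cos (B - A)" proof -
    have "2 * t1 = B - A" by (simp add: t1_def)
    then show ?thesis by simp
  qed
  also have "\<dots> = 1 + a * b + sqrt ((1 - a\<^sup>2) * (1 - b\<^sup>2))"
    by (simp add: cos_diff cA cB real_sqrt_mult mult.commute)
  finally show ?thesis using nx ny xy unfolding h_def by blast
qed

lemma real_v_le1:
  fixes a b :: real assumes "0 \<le> a" "a \<le> 1" "0 \<le> b" "b \<le> 1"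
  shows "a * b + sqrt ((1 - a\<^sup>2) * (1 - b\<^sup>2)) \<le> 1"
proof -
  have x: "0 \<le> 1 - a\<^sup>2" "0 \<le> 1 - b\<^sup>2" using assms by (auto simp: power_le_one)
  have "sqrt ((1 - a\<^sup>2) * (1 - b\<^sup>2)) \<le> ((1 - a\<^sup>2) + (1 - b\<^sup>2)) / 2"
    using arith_geo_mean_sqrt[OF x] .
  moreover have "a * b \<le> (a\<^sup>2 + b\<^sup>2) / 2"
    using zero_le_power2[of "a - b"] by (simp add: power2_eq_square field_simps)
  ultimately show ?thesis by (simp add: field_simps)
qed

lemma real_v_eq1:
  fixes a b :: real assumes "0 \<le> a" "a \<le> 1" "0 \<le> b" "b \<le> 1"
  shows "(1 + a * b + sqrt ((1 - a\<^sup>2) * (1 - b\<^sup>2))) / 2 = 1 \<longleftrightarrow> a = b"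
proof
  assume "a = b"
  moreover have "0 \<le> 1 - a\<^sup>2" using assms by (auto simp: power_le_one)
  ultimately show "(1 + a * b + sqrt ((1 - a\<^sup>2) * (1 - b\<^sup>2))) / 2 = 1"
    by (simp add: power2_eq_square[symmetric])
next
  assume h: "(1 + a * b + sqrt ((1 - a\<^sup>2) * (1 - b\<^sup>2))) / 2 = 1"
  have x: "0 \<le> 1 - a\<^sup>2" "0 \<le> 1 - b\<^sup>2" using assms by (auto simp: power_le_one)
  have "sqrt ((1 - a\<^sup>2) * (1 - b\<^sup>2)) = 1 - a * b" using h by simp
  then have "(1 - a\<^sup>2) * (1 - b\<^sup>2) = (1 - a * b)\<^sup>2"
    using x by (metis mult_nonneg_nonneg real_sqrt_pow2)
  then have "(a - b)\<^sup>2 = 0" by (simp add: power2_eq_square algebra_simps)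
  then show "a = b" by simp
qed

lemma unit_image: assumes "unitary_op U" "norm x = 1" shows "norm (U *v x) = 1"
  using assms unitary_braket[OF assms(1)] by (simp add: norm_iff)

theorem corollary2:
  fixes \<psi> \<phi> e f :: "complex ^ 2"
  assumes "norm \<psi> = 1" and "norm \<phi> = 1" and "norm e = 1" and "norm f = 1"
  defines "a \<equiv> cmod (braket \<psi> \<phi>)" and "b \<equiv> cmod (braket e f)"
  defines "v \<equiv> (1 + a * b + sqrt ((1 - a\<^sup>2) * (1 - b\<^sup>2))) / 2"
  shows "(\<forall>\<Psi>\<in>random_unitary_channels. success \<Psi> \<psi> \<phi> e f \<le> v)
       \<and> (\<exists>\<Psi>\<in>random_unitary_channels. success \<Psi> \<psi> \<phi> e f = v)
       \<and> (v = 1 \<longleftrightarrow> a = b)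
       \<and> (jointly_convertible random_unitary_channels \<psi> \<phi> e f \<longleftrightarrow> a = b)"
proof -
  have a01: "0 \<le> a" "a \<le> 1" unfolding a_def using braket_le1 assms by auto
  have b01: "0 \<le> b" "b \<le> 1" unfolding b_def using braket_le1 assms by auto
  have P1: "\<forall>\<Psi>\<in>random_unitary_channels. success \<Psi> \<psi> \<phi> e f \<le> v"
  proof
    fix \<Psi> assume "\<Psi> \<in> random_unitary_channels"
    then obtain n :: nat and p :: "nat \<Rightarrow> real" and U :: "nat \<Rightarrow> qop" where
      hp: "\<forall>x<n. 0 \<le> p x" and hs: "(\<Sum>x<n. p x) = 1" and hU: "\<forall>x<n. unitary_op (U x)"
      and hPsi: "\<Psi> = (\<lambda>A. \<Sum>x<n. p x *\<^sub>R (U x ** A ** adjm (U x)))"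
      unfolding random_unitary_channels_def by blast
    have "success \<Psi> \<psi> \<phi> e f = (\<Sum>x<n. p x * (((cmod (braket e (U x *v \<psi>)))\<^sup>2 + (cmod (braket f (U x *v \<phi>)))\<^sup>2) / 2))"
      by (rule success_formula[OF hPsi])
    also have "\<dots> \<le> (\<Sum>x<n. p x * v)"
    proof (rule sum_mono)
      fix k assume "k \<in> {..<n}"
      then have k: "0 \<le> p k" "unitary_op (U k)" using hp hU by auto
      have "(cmod (braket e (U k *v \<psi>)))\<^sup>2 + (cmod (braket f (U k *v \<phi>)))\<^sup>2 \<le> 2 * v"
        using core[OF unit_image[OF k(2) assms(1)] unit_image[OF k(2) assms(2)] assms(3,4)]
        unfolding unitary_braket[OF k(2)] v_def a_def b_def by simp
      then show "p k * (((cmod (braket e (U k *v \<psi>)))\<^sup>2 + (cmod (braket f (U k *v \<phi>)))\<^sup>2) / 2) \<le> p k * v"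
        using k(1) by (intro mult_left_mono) auto
    qed
    also have "\<dots> = v" using hs by (simp add: sum_distrib_right[symmetric])
    finally show "success \<Psi> \<psi> \<phi> e f \<le> v" .
  qed
  have single: "(\<lambda>A. U ** A ** adjm U) \<in> random_unitary_channels" if "unitary_op U" for U
  proof -
    have "(\<lambda>A. U ** A ** adjm U) = (\<lambda>A. \<Sum>x<(1::nat). (\<lambda>_. 1::real) x *\<^sub>R ((\<lambda>_. U) x ** A ** adjm ((\<lambda>_. U) x)))"
      by (simp add: One_nat_def lessThan_Suc del: sum_constant)
    then show ?thesis unfolding random_unitary_channels_def using that
      by (intro CollectI exI[of _ "1::nat"] exI[of _ "\<lambda>_. 1::real"] exI[of _ "\<lambda>_::nat. U"]) auto
  qed
  have P2: "\<exists>\<Psi>\<in>random_unitary_channels. success \<Psi> \<psi> \<phi> e f = v"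
  proof -
    obtain x y where xy: "norm x = 1" "norm y = 1" "braket x y = braket \<psi> \<phi>"
      and val: "(cmod (braket e x))\<^sup>2 + (cmod (braket f y))\<^sup>2 = 1 + a * b + sqrt ((1 - a\<^sup>2) * (1 - b\<^sup>2))"
      using attain[OF assms(1-4)] unfolding a_def b_def by blast
    obtain U where U: "unitary_op U" "U *v \<psi> = x" "U *v \<phi> = y"
      using unitary_exists[OF assms(1,2) xy] by blast
    have "success (\<lambda>A. \<Sum>x<(1::nat). (\<lambda>_. 1::real) x *\<^sub>R ((\<lambda>_. U) x ** A ** adjm ((\<lambda>_. U) x))) \<psi> \<phi> e f = v"
      by (subst success_formula[OF refl]) (simp add: U val v_def)
    moreover have "(\<lambda>A. \<Sum>x<(1::nat). (\<lambda>_. 1::real) x *\<^sub>R ((\<lambda>_. U) x ** A ** adjm ((\<lambda>_. U) x))) = (\<lambda>A. U ** A ** adjm U)"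
      by (simp add: One_nat_def lessThan_Suc del: sum_constant)
    ultimately show ?thesis using single[OF U(1)] by metis
  qed
  have P3: "v = 1 \<longleftrightarrow> a = b" unfolding v_def using real_v_eq1[OF a01 b01] .
  have P4: "jointly_convertible random_unitary_channels \<psi> \<phi> e f \<longleftrightarrow> a = b"
  proof
    assume "jointly_convertible random_unitary_channels \<psi> \<phi> e f"
    then obtain \<Psi> where "\<Psi> \<in> random_unitary_channels" and h: "\<Psi> (ketbra \<psi>) = ketbra e" "\<Psi> (ketbra \<phi>) = ketbra f"
      unfolding jointly_convertible_def by blast
    then have "success \<Psi> \<psi> \<phi> e f \<le> v" using P1 by blast
    moreover have "success \<Psi> \<psi> \<phi> e f = 1"
      unfolding success_def h braket_ketbra using braket_self[OF assms(3)] braket_self[OF assms(4)] by simp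
    moreover have "v \<le> 1" unfolding v_def using real_v_le1[OF a01 b01] by simp
    ultimately have "v = 1" by simp
    then show "a = b" using P3 by simp
  next
    assume ab: "a = b"
    define g where "g = braket e f"
    define h where "h = braket \<psi> \<phi>"
    define d where "d = (if g = 0 then 1 else h / g)"
    have gh: "cmod g = cmod h" using ab unfolding a_def b_def g_def h_def by simp
    have d1: "cnj d * d = 1"
    proof (cases "g = 0")
      case True then show ?thesis by (simp add: d_def)
    next
      case False
      then have "cmod h \<noteq> 0" using gh by (metis norm_eq_zero)
      then have "cmod d = 1" using gh False by (simp add: d_def norm_divide)
      then show ?thesis using complex_norm_square[of d] by (simp add: mult.commute)
    qed
    have dg: "d * g = h"
    proof (cases "g = 0")
      case True then show ?thesis using gh by (simp add: d_def)
    next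
      case False then show ?thesis by (simp add: d_def)
    qed
    define y where "y = d *s f"
    have ny: "norm y = 1" unfolding y_def norm_iff braket_scale_l braket_scale_r
      using braket_self[OF assms(4)] d1 by (simp add: mult.commute)
    have ey: "braket e y = braket \<psi> \<phi>" unfolding y_def braket_scale_r using dg g_def h_def by simp
    obtain U where U: "unitary_op U" "U *v \<psi> = e" "U *v \<phi> = y"
      using unitary_exists[OF assms(1,2,3) ny ey] by blast
    have ky: "ketbra y = ketbra f"
    proof -
      have "d * cnj d = 1" using d1 by (simp add: mult.commute)
      then show ?thesis unfolding y_def ketbra_def
        by (simp add: vec_eq_iff algebra_simps)
    qed
    show "jointly_convertible random_unitary_channels \<psi> \<phi> e f"
      unfolding jointly_convertible_def
      using single[OF U(1)] by (intro bexI[of _ "\<lambda>A. U ** A ** adjm U"]) (simp_all add: ketbra_conj U ky)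
  qed
  show ?thesis using P1 P2 P3 P4 by blast
qed

end
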